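(* Let $s\ge1$, $\theta\in\{0,1\}^s$, and suppose $f\in C^{|\theta|+1}(\mathbb{R}^s)$. Then for every $\alpha\in\mathbb{Z}^s$, $$\lim_{n\to\infty}\left|(-1)^{|\theta|}\,2^{(n+2)|\theta|+ns/2}\,d_{\theta,\alpha}^n(f)-\frac{D^\theta f\left(x_\alpha^n\right)}{\theta!}\right|=0.$$
   Context: Univariate Haar functions: $\psi_0:=\chi_{[0,1]}$ and $\psi_1:=\chi_{[0,\frac12]}-\chi_{[\frac12,1]}$. For $\theta\in\{0,1\}^s$ and $x\in\mathbb{R}^s$, $\psi_\theta(x):=\prod_{j=1}^s\psi_{\theta_j}(x_j)$. For $n\in\mathbb{N}_0$, $\alpha\in\mathbb{Z}^s$ the Haar coefficients are $d_{\theta,\alpha}^n(f):=2^{ns/2}\int_{\mathbb{R}^s}f(t)\,\psi_\theta(2^nt-\alpha)\,dt$. Let $\epsilon:=(1,\dots,1)\in\mathbb{Z}^s$ and $x_\alpha^n:=2^{-n}(\alpha+\frac12\epsilon)$. Multi-index notation: $|\theta|=\sum_j\theta_j$, $\theta!=\prod_j\theta_j!$, $D^\theta=\partial^{|\theta|}/\partial x_1^{\theta_1}\cdots\partial x_s^{\theta_s}$. *)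

theory Defs
  imports "HOL-Analysis.Analysis"
begin

definition partial_deriv :: "'n::finite \<Rightarrow> (real^'n \<Rightarrow> real) \<Rightarrow> real^'n \<Rightarrow> real" where
  "partial_deriv i f x = deriv (\<lambda>t. f (x + t *\<^sub>R axis i 1)) 0"

fun Ck :: "nat \<Rightarrow> (real^'n::finite \<Rightarrow> real) \<Rightarrow> bool" where
  "Ck 0 f = continuous_on UNIV f"
| "Ck (Suc k) f = (continuous_on UNIV f \<and>
      (\<forall>i x. (\<lambda>t. f (x + t *\<^sub>R axis i 1)) differentiable (at 0)) \<and>
      (\<forall>i. Ck k (partial_deriv i f)))"

text \<open>D^theta f for theta in {0,1}^s: differentiate once in each coordinate j with theta j = 1
  (in a fixed enumeration order of these coordinates; for C^{|theta|} functions the order is irrelevant).\<close>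
definition D_theta :: "('n::finite \<Rightarrow> nat) \<Rightarrow> (real^'n \<Rightarrow> real) \<Rightarrow> real^'n \<Rightarrow> real" where
  "D_theta \<theta> f = foldr partial_deriv (SOME xs. distinct xs \<and> set xs = {j. \<theta> j = 1}) f"

definition haar1 :: "nat \<Rightarrow> real \<Rightarrow> real" where
  "haar1 e x = (if e = 0 then indicator {0..1} x
                else indicator {0..1/2} x - indicator {1/2..1} x)"

definition haar :: "('n::finite \<Rightarrow> nat) \<Rightarrow> real^'n \<Rightarrow> real" where
  "haar \<theta> x = (\<Prod>j\<in>UNIV. haar1 (\<theta> j) (x $ j))"

definition haar_coeff :: "nat \<Rightarrow> ('n::finite \<Rightarrow> nat) \<Rightarrow> ('n \<Rightarrow> int) \<Rightarrow> (real^'n \<Rightarrow> real) \<Rightarrow> real" where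
  "haar_coeff n \<theta> \<alpha> f = 2 powr (real n * real CARD('n) / 2) *
     integral UNIV (\<lambda>t. f t * haar \<theta> (\<chi> j. 2 ^ n * t $ j - of_int (\<alpha> j)))"

definition grid_pt :: "nat \<Rightarrow> ('n::finite \<Rightarrow> int) \<Rightarrow> real^'n" where
  "grid_pt n \<alpha> = (\<chi> j. (of_int (\<alpha> j) + 1/2) / 2 ^ n)"

end

theory Submission
  imports Defs
begin

lemma deriv_diff_real:
  fixes f g :: "real \<Rightarrow> real"
  assumes "f differentiable (at 0)" "g differentiable (at 0)"
  shows "deriv (\<lambda>t. f t - g t) 0 = deriv f 0 - deriv g 0"
proof -
  have "DERIV f 0 :> deriv f 0" "DERIV g 0 :> deriv g 0"
    using assms DERIV_deriv_iff_real_differentiable by blast+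
  then have "DERIV (\<lambda>t. f t - g t) 0 :> deriv f 0 - deriv g 0"
    by (intro derivative_intros)
  then show ?thesis by (rule DERIV_imp_deriv)
qed

lemma pd_diff:
  fixes g :: "real^'n::finite \<Rightarrow> real"
  assumes "\<forall>i x. (\<lambda>t. g (x + t *\<^sub>R axis i 1)) differentiable (at 0)"
  shows "partial_deriv i (\<lambda>x. g x - g (x + c)) = (\<lambda>x. partial_deriv i g x - partial_deriv i g (x + c))"
proof
  fix x
  have e2: "(\<lambda>t. g (x + t *\<^sub>R axis i 1) - g (x + t *\<^sub>R axis i 1 + c)) = (\<lambda>t. g (x + t *\<^sub>R axis i 1) - g ((x + c) + t *\<^sub>R axis i 1))"
    by (simp add: algebra_simps)
  show "partial_deriv i (\<lambda>x. g x - g (x + c)) x = partial_deriv i g x - partial_deriv i g (x + c)"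
    unfolding partial_deriv_def e2
    by (rule deriv_diff_real) (use assms in blast)+
qed

lemma cont_shift:
  fixes g :: "real^'n::finite \<Rightarrow> real"
  assumes "continuous_on UNIV g"
  shows "continuous_on UNIV (\<lambda>x. g x - g (x + c))"
proof -
  have "continuous_on UNIV (\<lambda>x. g (x + c))"
    by (rule continuous_on_compose2[OF assms continuous_on_add[OF continuous_on_id continuous_on_const]]) simp
  then show ?thesis by (rule continuous_on_diff[OF assms])
qed

lemma Ck_diff:
  fixes g :: "real^'n::finite \<Rightarrow> real"
  shows "Ck m g \<Longrightarrow> Ck m (\<lambda>x. g x - g (x + c))"
proof (induction m arbitrary: g)
  case 0
  then show ?case using cont_shift by simp
next
  case (Suc m)
  have cg: "continuous_on UNIV g" and dg: "\<forall>i x. (\<lambda>t. g (x + t *\<^sub>R axis i 1)) differentiable (at 0)"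
    and pg: "\<forall>i. Ck m (partial_deriv i g)" using Suc.prems by auto
  have c1: "continuous_on UNIV (\<lambda>x. g x - g (x + c))" using cont_shift[OF cg] .
  have c2: "(\<lambda>t. g (x + t *\<^sub>R axis i 1) - g (x + t *\<^sub>R axis i 1 + c)) differentiable (at 0)" for i x
  proof -
    have e: "(\<lambda>t. g (x + t *\<^sub>R axis i 1 + c)) = (\<lambda>t. g ((x + c) + t *\<^sub>R axis i 1))"
      by (simp add: algebra_simps)
    have d1: "(\<lambda>t. g (x + t *\<^sub>R axis i 1)) differentiable (at 0)" using dg by blast
    have d2: "(\<lambda>t. g (x + t *\<^sub>R axis i 1 + c)) differentiable (at 0)" unfolding e using dg by blast
    show ?thesis using differentiable_diff[OF d1 d2] by simp
  qed
  have c3: "Ck m (partial_deriv i (\<lambda>x. g x - g (x + c)))" for i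
    unfolding pd_diff[OF dg] using Suc.IH pg by blast
  show ?case unfolding Ck.simps using c1 c2 c3 by blast
qed

lemma Ck_foldr:
  fixes f :: "real^'n::finite \<Rightarrow> real"
  shows "Ck m f \<Longrightarrow> length xs \<le> m \<Longrightarrow> Ck (m - length xs) (foldr partial_deriv xs f)"
proof (induction xs)
  case Nil
  then show ?case by simp
next
  case (Cons i xs)
  then have h: "Ck (m - length xs) (foldr partial_deriv xs f)" by simp
  have "m - length xs = Suc (m - length (i # xs))" using Cons.prems by simp
  then have "Ck (Suc (m - length (i # xs))) (foldr partial_deriv xs f)" using h by simp
  then show ?case by simp
qed

lemma foldr_diff:
  fixes f :: "real^'n::finite \<Rightarrow> real"
  shows "Ck m f \<Longrightarrow> length xs \<le> m \<Longrightarrow>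
    foldr partial_deriv xs (\<lambda>x. f x - f (x + c)) = (\<lambda>x. foldr partial_deriv xs f x - foldr partial_deriv xs f (x + c))"
proof (induction xs)
  case Nil
  then show ?case by simp
next
  case (Cons i xs)
  have h: "Ck (m - length xs) (foldr partial_deriv xs f)" using Ck_foldr[of m f xs] Cons.prems by simp
  have "m - length xs = Suc (m - length (i # xs))" using Cons.prems by simp
  then have "Ck (Suc (m - length (i # xs))) (foldr partial_deriv xs f)" using h by simp
  then have d: "\<forall>i x. (\<lambda>t. foldr partial_deriv xs f (x + t *\<^sub>R axis i 1)) differentiable (at 0)"
    by simp
  have "foldr partial_deriv (i # xs) (\<lambda>x. f x - f (x + c)) = partial_deriv i (\<lambda>x. foldr partial_deriv xs f x - foldr partial_deriv xs f (x + c))"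
    using Cons by simp
  also have "\<dots> = (\<lambda>x. partial_deriv i (foldr partial_deriv xs f) x - partial_deriv i (foldr partial_deriv xs f) (x + c))"
    by (rule pd_diff[OF d])
  finally show ?case by simp
qed


primrec diffop :: "real \<Rightarrow> 'n::finite list \<Rightarrow> (real^'n \<Rightarrow> real) \<Rightarrow> real^'n \<Rightarrow> real" where
  "diffop d [] f = f"
| "diffop d (j # xs) f = diffop d xs (\<lambda>x. f x - f (x + d *\<^sub>R axis j 1))"

lemma diffop_mvt:
  fixes f :: "real^'n::finite \<Rightarrow> real"
  assumes "d > 0"
  shows "Ck m f \<Longrightarrow> length xs \<le> m \<Longrightarrow> \<exists>\<xi>. norm (\<xi> - t) \<le> real (length xs) * d \<and>
      diffop d xs f t = (-d) ^ length xs * foldr partial_deriv xs f \<xi>"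
proof (induction xs arbitrary: f t)
  case Nil
  then show ?case by (intro exI[of _ t]) simp
next
  case (Cons j xs)
  define g where "g = (\<lambda>x. f x - f (x + d *\<^sub>R axis j 1))"
  have cg: "Ck m g" unfolding g_def using Cons.prems Ck_diff by blast
  obtain \<xi> where \<xi>: "norm (\<xi> - t) \<le> real (length xs) * d"
    and eq: "diffop d xs g t = (-d) ^ length xs * foldr partial_deriv xs g \<xi>"
    using Cons.IH[OF cg] Cons.prems by auto
  define F where "F = foldr partial_deriv xs f"
  have fg: "foldr partial_deriv xs g = (\<lambda>x. F x - F (x + d *\<^sub>R axis j 1))"
    unfolding g_def F_def using foldr_diff[of m f xs "d *\<^sub>R axis j 1"] Cons.prems by simp
  have "Ck (m - length xs) F"
    unfolding F_def using Ck_foldr[of m f xs] Cons.prems by simp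
  moreover have "m - length xs = Suc (m - Suc (length xs))" using Cons.prems by simp
  ultimately have "Ck (Suc (m - Suc (length xs))) F" by simp
  then have dF: "\<forall>i x. (\<lambda>s. F (x + s *\<^sub>R axis i 1)) differentiable (at 0)" by simp
  define \<phi> where "\<phi> = (\<lambda>\<tau>. F (\<xi> + \<tau> *\<^sub>R axis j 1))"
  have der: "DERIV \<phi> \<tau> :> partial_deriv j F (\<xi> + \<tau> *\<^sub>R axis j 1)" for \<tau>
  proof -
    have "DERIV (\<lambda>s. F ((\<xi> + \<tau> *\<^sub>R axis j 1) + s *\<^sub>R axis j 1)) 0 :> partial_deriv j F (\<xi> + \<tau> *\<^sub>R axis j 1)"
      unfolding partial_deriv_def using dF DERIV_deriv_iff_real_differentiable by blast
    moreover have "(\<lambda>s. F ((\<xi> + \<tau> *\<^sub>R axis j 1) + s *\<^sub>R axis j 1)) = (\<lambda>s. \<phi> (s + \<tau>))"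
      unfolding \<phi>_def by (simp add: algebra_simps)
    ultimately have "((\<lambda>s. \<phi> (s + \<tau>)) has_field_derivative partial_deriv j F (\<xi> + \<tau> *\<^sub>R axis j 1)) (at 0)"
      by simp
    then show ?thesis using DERIV_shift[of \<phi> _ 0 \<tau>] by simp
  qed
  have "\<exists>z. 0 < z \<and> z < d \<and> \<phi> d - \<phi> 0 = (d - 0) * partial_deriv j F (\<xi> + z *\<^sub>R axis j 1)"
    by (rule MVT2[OF assms]) (rule der)
  then obtain z where z: "0 < z" "z < d" and mvt: "\<phi> d - \<phi> 0 = (d - 0) * partial_deriv j F (\<xi> + z *\<^sub>R axis j 1)"
    by blast
  define \<xi>' where "\<xi>' = \<xi> + z *\<^sub>R axis j 1"
  have xe: "\<xi>' - t = (\<xi> - t) + z *\<^sub>R axis j 1" by (simp add: \<xi>'_def algebra_simps)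
  have "norm (\<xi>' - t) \<le> norm (\<xi> - t) + norm (z *\<^sub>R axis j (1::real))"
    unfolding xe by (rule norm_triangle_ineq)
  also have "\<dots> \<le> real (length xs) * d + d" using \<xi> z by simp
  finally have n: "norm (\<xi>' - t) \<le> real (length (j # xs)) * d" by (simp add: algebra_simps)
  have e1: "F \<xi> - F (\<xi> + d *\<^sub>R axis j 1) = - (d * foldr partial_deriv (j # xs) f \<xi>')"
    using mvt unfolding \<phi>_def \<xi>'_def F_def by simp
  have "diffop d (j # xs) f t = (-d) ^ length xs * (F \<xi> - F (\<xi> + d *\<^sub>R axis j 1))"
    using eq fg by (simp add: g_def)
  then have "diffop d (j # xs) f t = (-d) ^ length (j # xs) * foldr partial_deriv (j # xs) f \<xi>'"
    using e1 by simp
  then show ?case using n by blast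
qed


definition cvec :: "real \<Rightarrow> 'n::finite set \<Rightarrow> real^'n" where
  "cvec d S = (\<chi> i. if i \<in> S then d else 0)"

lemma cvec_insert: "j \<notin> S \<Longrightarrow> cvec d (insert j S) = cvec d S + d *\<^sub>R axis j 1"
  unfolding cvec_def by (vector axis_def)

lemma sum_Pow_insert':
  assumes "finite A" "j \<notin> A"
  shows "(\<Sum>S\<in>Pow (insert j A). h S) = (\<Sum>S\<in>Pow A. h S) + (\<Sum>S\<in>Pow A. h (insert j S))"
proof -
  have inj: "inj_on (insert j) (Pow A)"
    unfolding inj_on_def using assms(2) by (metis PowD insert_ident subset_iff)
  have disj: "Pow A \<inter> insert j ` Pow A = {}" using assms(2) by auto
  have "(\<Sum>S\<in>Pow (insert j A). h S) = (\<Sum>S\<in>Pow A \<union> insert j ` Pow A. h S)"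
    by (simp add: Pow_insert)
  also have "\<dots> = (\<Sum>S\<in>Pow A. h S) + (\<Sum>S\<in>insert j ` Pow A. h S)"
    by (rule sum.union_disjoint) (use assms disj in auto)
  also have "(\<Sum>S\<in>insert j ` Pow A. h S) = (\<Sum>S\<in>Pow A. h (insert j S))"
    by (rule sum.reindex_cong[OF inj]) auto
  finally show ?thesis .
qed

lemma diffop_sum:
  fixes f :: "real^'n::finite \<Rightarrow> real"
  shows "distinct xs \<Longrightarrow> diffop d xs f t = (\<Sum>S\<in>Pow (set xs). (-1) ^ card S * f (t + cvec d S))"
proof (induction xs arbitrary: f)
  case Nil
  then show ?case by (simp add: cvec_def zero_vec_def[symmetric])
next
  case (Cons j xs)
  have nj: "j \<notin> set xs" and dx: "distinct xs" using Cons.prems by auto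
  have "diffop d (j # xs) f t = (\<Sum>S\<in>Pow (set xs). (-1) ^ card S * (f (t + cvec d S) - f (t + cvec d S + d *\<^sub>R axis j 1)))"
    using Cons.IH[OF dx] by simp
  also have "\<dots> = (\<Sum>S\<in>Pow (set xs). (-1) ^ card S * f (t + cvec d S)) +
      (\<Sum>S\<in>Pow (set xs). (-1) ^ card (insert j S) * f (t + cvec d (insert j S)))"
  proof -
    have "(-1) ^ card (insert j S) * f (t + cvec d (insert j S)) = - ((-1) ^ card S * f (t + cvec d S + d *\<^sub>R axis j 1))"
      if "S \<in> Pow (set xs)" for S
    proof -
      have "j \<notin> S" "finite S" using that nj finite_subset by auto
      then show ?thesis by (simp add: cvec_insert add.assoc)
    qed
    then show ?thesis by (simp add: right_diff_distrib sum_subtractf sum_negf)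
  qed
  also have "\<dots> = (\<Sum>S\<in>Pow (set (j # xs)). (-1) ^ card S * f (t + cvec d S))"
    using sum_Pow_insert'[of "set xs" j "\<lambda>S. (-1) ^ card S * f (t + cvec d S)"] nj by simp
  finally show ?case .
qed


lemma prod_expand:
  fixes p q r :: "'a \<Rightarrow> real"
  assumes "finite A"
  shows "(\<Prod>j\<in>A. if j \<in> T then p j - q j else r j) =
    (\<Sum>S\<in>Pow (A \<inter> T). (-1) ^ card S * (\<Prod>j\<in>A. if j \<in> S then q j else if j \<in> T then p j else r j))"
  using assms
proof (induction A rule: finite_induct)
  case empty
  then show ?case by simp
next
  case (insert a A)
  define P where "P S = (\<Prod>j\<in>A. if j \<in> S then q j else if j \<in> T then p j else r j)" for S
  have IH: "(\<Prod>j\<in>A. if j \<in> T then p j - q j else r j) = (\<Sum>S\<in>Pow (A \<inter> T). (-1) ^ card S * P S)"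
    using insert.IH unfolding P_def .
  show ?case
  proof (cases "a \<in> T")
    case True
    have aT: "insert a A \<inter> T = insert a (A \<inter> T)" using True by auto
    have na: "a \<notin> A \<inter> T" using insert.hyps by auto
    have fin: "finite (A \<inter> T)" using insert.hyps by auto
    have e1: "(\<Prod>j\<in>insert a A. if j \<in> S then q j else if j \<in> T then p j else r j) = p a * P S"
      if "S \<in> Pow (A \<inter> T)" for S
    proof -
      have "a \<notin> S" using that na by auto
      then show ?thesis using insert.hyps True unfolding P_def by simp
    qed
    have e2: "(-1) ^ card (insert a S) * (\<Prod>j\<in>insert a A. if j \<in> insert a S then q j else if j \<in> T then p j else r j)
        = - (q a * ((-1) ^ card S * P S))"
      if "S \<in> Pow (A \<inter> T)" for S
    proof -
      have aS1: "a \<notin> S" using that na by auto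
      have aS2: "finite S" using that fin by (meson PowD finite_subset)
      note aS = aS1 aS2
      have "(\<Prod>j\<in>A. if j \<in> insert a S then q j else if j \<in> T then p j else r j) = P S"
        unfolding P_def using insert.hyps by (intro prod.cong) auto
      then show ?thesis using insert.hyps aS by simp
    qed
    have "(\<Sum>S\<in>Pow (insert a A \<inter> T). (-1) ^ card S * (\<Prod>j\<in>insert a A. if j \<in> S then q j else if j \<in> T then p j else r j))
      = (\<Sum>S\<in>Pow (A \<inter> T). (-1) ^ card S * (\<Prod>j\<in>insert a A. if j \<in> S then q j else if j \<in> T then p j else r j))
        + (\<Sum>S\<in>Pow (A \<inter> T). (-1) ^ card (insert a S) * (\<Prod>j\<in>insert a A. if j \<in> insert a S then q j else if j \<in> T then p j else r j))"
      unfolding aT by (rule sum_Pow_insert'[OF fin na])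
    also have "\<dots> = (\<Sum>S\<in>Pow (A \<inter> T). p a * ((-1) ^ card S * P S)) + (\<Sum>S\<in>Pow (A \<inter> T). - (q a * ((-1) ^ card S * P S)))"
      using e1 e2 by (intro arg_cong2[where f="(+)"] sum.cong) auto
    also have "\<dots> = (p a - q a) * (\<Sum>S\<in>Pow (A \<inter> T). (-1) ^ card S * P S)"
      by (simp add: sum_distrib_left sum_negf left_diff_distrib sum_subtractf)
    also have "\<dots> = (\<Prod>j\<in>insert a A. if j \<in> T then p j - q j else r j)"
      using IH insert.hyps True by simp
    finally show ?thesis by simp
  next
    case False
    have aT: "insert a A \<inter> T = A \<inter> T" using False by auto
    have e1: "(\<Prod>j\<in>insert a A. if j \<in> S then q j else if j \<in> T then p j else r j) = r a * P S"
      if "S \<in> Pow (A \<inter> T)" for S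
    proof -
      have "a \<notin> S" using that False by auto
      then show ?thesis using insert.hyps False unfolding P_def by simp
    qed
    have "(\<Sum>S\<in>Pow (insert a A \<inter> T). (-1) ^ card S * (\<Prod>j\<in>insert a A. if j \<in> S then q j else if j \<in> T then p j else r j))
       = (\<Sum>S\<in>Pow (A \<inter> T). r a * ((-1) ^ card S * P S))"
      unfolding aT using e1 by (intro sum.cong) auto
    also have "\<dots> = (\<Prod>j\<in>insert a A. if j \<in> T then p j - q j else r j)"
      using IH insert.hyps False by (simp add: sum_distrib_left)
    finally show ?thesis by simp
  qed
qed

lemma prod_01:
  fixes P :: "'a \<Rightarrow> bool"
  assumes "finite A"
  shows "(\<Prod>j\<in>A. if P j then 1 else (0::real)) = (if \<forall>j\<in>A. P j then 1 else 0)"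
  using assms by (induction A rule: finite_induct) auto


lemma haar_expand:
  fixes \<theta> :: "'n::finite \<Rightarrow> nat" and \<alpha> :: "'n \<Rightarrow> int" and t :: "real^'n"
  assumes th: "\<forall>j. \<theta> j \<in> {0, 1}"
  shows "haar \<theta> (\<chi> j. 2 ^ n * t $ j - of_int (\<alpha> j)) =
    (\<Sum>S\<in>Pow {j. \<theta> j = 1}. (-1) ^ card S *
       indicator (cbox ((\<chi> j. of_int (\<alpha> j) / 2 ^ n) + cvec (1 / 2 ^ Suc n) S)
                       ((\<chi> j. (of_int (\<alpha> j) + (if \<theta> j = 1 then 1/2 else 1)) / 2 ^ n) + cvec (1 / 2 ^ Suc n) S)) t)"
proof -
  define T where "T = {j. \<theta> j = 1}"
  define y where "y j = 2 ^ n * t $ j - of_int (\<alpha> j)" for j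
  define a :: "real^'n" where "a = (\<chi> j. of_int (\<alpha> j) / 2 ^ n)"
  define b :: "real^'n" where "b = (\<chi> j. (of_int (\<alpha> j) + (if \<theta> j = 1 then 1/2 else 1)) / 2 ^ n)"
  define d :: real where "d = 1 / 2 ^ Suc n"
  define p :: "'n \<Rightarrow> real" where "p j = indicator {0..1/2} (y j)" for j
  define q :: "'n \<Rightarrow> real" where "q j = indicator {1/2..1} (y j)" for j
  define r :: "'n \<Rightarrow> real" where "r j = indicator {0..1} (y j)" for j
  have P: "(2::real) ^ n > 0" by simp
  have "haar \<theta> (\<chi> j. 2 ^ n * t $ j - of_int (\<alpha> j)) = (\<Prod>j\<in>UNIV. if j \<in> T then p j - q j else r j)"
    unfolding haar_def
  proof (intro prod.cong refl)
    fix j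
    show "haar1 (\<theta> j) ((\<chi> j. 2 ^ n * t $ j - of_int (\<alpha> j)) $ j) = (if j \<in> T then p j - q j else r j)"
      using th[rule_format, of j] unfolding haar1_def p_def q_def r_def y_def T_def by auto
  qed
  also have "\<dots> = (\<Sum>S\<in>Pow T. (-1) ^ card S * (\<Prod>j\<in>UNIV. if j \<in> S then q j else if j \<in> T then p j else r j))"
    using prod_expand[of UNIV T p q r] by simp
  also have "\<dots> = (\<Sum>S\<in>Pow T. (-1) ^ card S * indicator (cbox (a + cvec d S) (b + cvec d S)) t)"
  proof (intro sum.cong refl arg_cong2[where f="(*)"])
    fix S assume "S \<in> Pow T"
    then have ST: "S \<subseteq> T" by auto
    define lo where "lo j = (if j \<in> S then 1/2 else (0::real))" for j
    define hi where "hi j = (if j \<in> S then 1 else if j \<in> T then 1/2 else (1::real))" for j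
    have fac: "(if j \<in> S then q j else if j \<in> T then p j else r j) = (if lo j \<le> y j \<and> y j \<le> hi j then 1 else 0)" for j
      unfolding lo_def hi_def p_def q_def r_def indicator_def by auto
    have ea: "(a + cvec d S) $ j = (of_int (\<alpha> j) + lo j) / 2 ^ n" for j
      unfolding a_def cvec_def d_def lo_def by (simp add: field_simps)
    have eb: "(b + cvec d S) $ j = (of_int (\<alpha> j) + hi j) / 2 ^ n" for j
      using ST unfolding b_def cvec_def d_def hi_def T_def by (auto simp add: field_simps)
    have c1: "((of_int (\<alpha> j) + lo j) / 2 ^ n \<le> t $ j) = (lo j \<le> y j)" for j
      unfolding y_def using P by (simp add: pos_divide_le_eq algebra_simps)
    have c2: "(t $ j \<le> (of_int (\<alpha> j) + hi j) / 2 ^ n) = (y j \<le> hi j)" for j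
      unfolding y_def using P by (simp add: pos_le_divide_eq algebra_simps)
    have "(\<Prod>j\<in>UNIV. if j \<in> S then q j else if j \<in> T then p j else r j) =
        (\<Prod>j\<in>UNIV. if lo j \<le> y j \<and> y j \<le> hi j then 1 else 0)"
      using fac by simp
    also have "\<dots> = (if \<forall>j\<in>UNIV. lo j \<le> y j \<and> y j \<le> hi j then 1 else 0)"
      by (rule prod_01) simp
    also have "\<dots> = indicator (cbox (a + cvec d S) (b + cvec d S)) t"
      unfolding indicator_def mem_box_cart ea eb c1 c2 by simp
    finally show "(\<Prod>j\<in>UNIV. if j \<in> S then q j else if j \<in> T then p j else r j) =
        indicator (cbox (a + cvec d S) (b + cvec d S)) t" .
  qed
  finally show ?thesis unfolding a_def b_def d_def T_def .
qed


lemma cont_shift2: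
  fixes g :: "real^'n::finite \<Rightarrow> real"
  assumes "continuous_on UNIV g"
  shows "continuous_on S (\<lambda>x. g (x + c))"
  by (rule continuous_on_compose2[OF assms continuous_on_add[OF continuous_on_id continuous_on_const]]) simp

lemma haar_integral:
  fixes \<theta> :: "'n::finite \<Rightarrow> nat" and \<alpha> :: "'n \<Rightarrow> int" and f :: "real^'n \<Rightarrow> real"
  assumes th: "\<forall>j. \<theta> j \<in> {0, 1}" and cf: "continuous_on UNIV f"
    and xs: "distinct xs" "set xs = {j. \<theta> j = 1}"
  shows "integral UNIV (\<lambda>t. f t * haar \<theta> (\<chi> j. 2 ^ n * t $ j - of_int (\<alpha> j))) =
    integral (cbox (\<chi> j. of_int (\<alpha> j) / 2 ^ n) (\<chi> j. (of_int (\<alpha> j) + (if \<theta> j = 1 then 1/2 else 1)) / 2 ^ n))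
      (diffop (1 / 2 ^ Suc n) xs f)"
proof -
  define T where "T = {j. \<theta> j = 1}"
  define a :: "real^'n" where "a = (\<chi> j. of_int (\<alpha> j) / 2 ^ n)"
  define b :: "real^'n" where "b = (\<chi> j. (of_int (\<alpha> j) + (if \<theta> j = 1 then 1/2 else 1)) / 2 ^ n)"
  define d :: real where "d = 1 / 2 ^ Suc n"
  define B where "B S = cbox (a + cvec d S) (b + cvec d S)" for S
  have fin: "finite (Pow T)" by simp
  have "(\<lambda>t. f t * haar \<theta> (\<chi> j. 2 ^ n * t $ j - of_int (\<alpha> j))) =
      (\<lambda>t. \<Sum>S\<in>Pow T. (-1) ^ card S * (if t \<in> B S then f t else 0))"
  proof
    fix t
    show "f t * haar \<theta> (\<chi> j. 2 ^ n * t $ j - of_int (\<alpha> j)) = (\<Sum>S\<in>Pow T. (-1) ^ card S * (if t \<in> B S then f t else 0))"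
      unfolding haar_expand[OF th] sum_distrib_left
      by (intro sum.cong) (auto simp: B_def a_def b_def d_def T_def indicator_def)
  qed
  then have "integral UNIV (\<lambda>t. f t * haar \<theta> (\<chi> j. 2 ^ n * t $ j - of_int (\<alpha> j))) =
      integral UNIV (\<lambda>t. \<Sum>S\<in>Pow T. (-1) ^ card S * (if t \<in> B S then f t else 0))" by simp
  also have "\<dots> = (\<Sum>S\<in>Pow T. integral UNIV (\<lambda>t. (-1) ^ card S * (if t \<in> B S then f t else 0)))"
  proof (rule Henstock_Kurzweil_Integration.integral_sum[OF fin])
    fix S
    have "f integrable_on B S" unfolding B_def
      by (rule integrable_continuous) (rule continuous_on_subset[OF cf], simp)
    then have "(\<lambda>t. if t \<in> B S then f t else 0) integrable_on UNIV"
      using integrable_restrict_UNIV by blast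
    then show "(\<lambda>t. (-1) ^ card S * (if t \<in> B S then f t else 0)) integrable_on UNIV"
      by (rule integrable_on_mult_right)
  qed
  also have "\<dots> = (\<Sum>S\<in>Pow T. (-1) ^ card S * integral (cbox a b) (\<lambda>t. f (t + cvec d S)))"
  proof (intro sum.cong refl)
    fix S
    have "integral UNIV (\<lambda>t. (-1) ^ card S * (if t \<in> B S then f t else 0)) = (-1) ^ card S * integral (B S) f"
      by (simp add: integral_restrict_UNIV)
    also have "integral (B S) f = integral (cbox a b) (f \<circ> (+) (cvec d S))"
      unfolding B_def by (rule integral_shift_cbox_plus[symmetric])
    also have "(f \<circ> (+) (cvec d S)) = (\<lambda>t. f (t + cvec d S))" by (auto simp: add.commute)
    finally show "integral UNIV (\<lambda>t. (-1) ^ card S * (if t \<in> B S then f t else 0)) =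
        (-1) ^ card S * integral (cbox a b) (\<lambda>t. f (t + cvec d S))" .
  qed
  also have "\<dots> = (\<Sum>S\<in>Pow T. integral (cbox a b) (\<lambda>t. (-1) ^ card S * f (t + cvec d S)))"
    by simp
  also have "\<dots> = integral (cbox a b) (\<lambda>t. \<Sum>S\<in>Pow T. (-1) ^ card S * f (t + cvec d S))"
  proof (rule Henstock_Kurzweil_Integration.integral_sum[OF fin, symmetric])
    fix S
    show "(\<lambda>t. (-1) ^ card S * f (t + cvec d S)) integrable_on cbox a b"
      by (intro integrable_on_mult_right integrable_continuous cont_shift2[OF cf])
  qed
  also have "(\<lambda>t. \<Sum>S\<in>Pow T. (-1) ^ card S * f (t + cvec d S)) = diffop d xs f"
    using diffop_sum[OF xs(1)] xs(2) unfolding T_def by auto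
  finally show ?thesis unfolding a_def b_def d_def .
qed


lemma Ck_cont: "Ck m g \<Longrightarrow> continuous_on UNIV g"
  by (cases m) auto

lemma Ck_diffop:
  fixes f :: "real^'n::finite \<Rightarrow> real"
  shows "Ck m f \<Longrightarrow> Ck m (diffop d xs f)"
proof (induction xs arbitrary: f)
  case Nil
  then show ?case by simp
next
  case (Cons j xs)
  then show ?case using Ck_diff[OF Cons.prems] by simp
qed

lemma content_box:
  fixes \<theta> :: "'n::finite \<Rightarrow> nat" and \<alpha> :: "'n \<Rightarrow> int"
  shows "measure lborel (cbox (\<chi> j. of_int (\<alpha> j) / 2 ^ n) (\<chi> j. (of_int (\<alpha> j) + (if \<theta> j = 1 then 1/2 else 1)) / 2 ^ n) :: (real^'n) set)
    = (1/2) ^ card {j. \<theta> j = 1} * (1 / 2 ^ n) ^ CARD('n)"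
proof -
  define a :: "real^'n" where "a = (\<chi> j. of_int (\<alpha> j) / 2 ^ n)"
  define b :: "real^'n" where "b = (\<chi> j. (of_int (\<alpha> j) + (if \<theta> j = 1 then 1/2 else 1)) / 2 ^ n)"
  have "a \<in> cbox a b" unfolding mem_box_cart a_def b_def by (auto simp: divide_right_mono)
  then have ne: "cbox a b \<noteq> {}" by auto
  have "measure lborel (cbox a b) = (\<Prod>j\<in>UNIV. b $ j - a $ j)"
    using ne by (simp add: content_cbox_cart)
  also have "\<dots> = (\<Prod>j\<in>UNIV. (if \<theta> j = 1 then 1/2 else 1) * (1 / 2 ^ n))"
    unfolding a_def b_def by (intro prod.cong refl) (simp add: field_simps)
  also have "\<dots> = (\<Prod>j\<in>UNIV. (if \<theta> j = 1 then 1/2 else 1)) * (1 / 2 ^ n) ^ CARD('n)"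
    by (simp only: prod.distrib prod_constant)
  also have "(\<Prod>j\<in>UNIV. (if \<theta> j = 1 then 1/2 else (1::real))) = (1/2) ^ card {j. \<theta> j = 1}"
    by (simp add: prod.If_cases)
  finally show ?thesis unfolding a_def b_def .
qed

lemma scale_id:
  "(2::real) ^ ((n + 2) * k + n * s) * ((1/2) ^ k * (1 / 2 ^ n) ^ s) * (1 / 2 ^ Suc n) ^ k = 1"
proof -
  have "(n + 2) * k + n * s = Suc n * k + k + n * s" by (simp add: algebra_simps)
  then have "(2::real) ^ ((n + 2) * k + n * s) = (2 ^ Suc n) ^ k * 2 ^ k * (2 ^ n) ^ s"
    by (simp only: power_add power_mult)
  then show ?thesis by (simp add: field_simps power_mult_distrib)
qed

lemma powr_conv:
  "(2::real) powr ((real n + 2) * real k + real n * real s / 2) * 2 powr (real n * real s / 2)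
     = 2 ^ ((n + 2) * k + n * s)"
proof -
  have "(2::real) powr ((real n + 2) * real k + real n * real s / 2) * 2 powr (real n * real s / 2)
      = 2 powr ((real n + 2) * real k + real n * real s / 2 + real n * real s / 2)"
    by (rule powr_add[symmetric])
  also have "(real n + 2) * real k + real n * real s / 2 + real n * real s / 2 = real ((n + 2) * k + n * s)"
    by (simp add: algebra_simps)
  also have "(2::real) powr real ((n + 2) * k + n * s) = 2 ^ ((n + 2) * k + n * s)"
    by (rule powr_realpow) simp
  finally show ?thesis .
qed

lemma box_norm:
  fixes \<theta> :: "'n::finite \<Rightarrow> nat" and \<alpha> :: "'n \<Rightarrow> int" and t :: "real^'n"
  assumes "t \<in> cbox (\<chi> j. of_int (\<alpha> j) / 2 ^ n) (\<chi> j. (of_int (\<alpha> j) + (if \<theta> j = 1 then 1/2 else 1)) / 2 ^ n)"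
  shows "norm t \<le> (\<Sum>j\<in>UNIV. \<bar>of_int (\<alpha> j)\<bar> + 1) / 2 ^ n"
proof -
  have P: "(2::real) ^ n > 0" by simp
  have "\<bar>t $ j\<bar> \<le> (\<bar>of_int (\<alpha> j)\<bar> + 1) / 2 ^ n" for j
  proof -
    have l: "of_int (\<alpha> j) / 2 ^ n \<le> t $ j" and u: "t $ j \<le> (of_int (\<alpha> j) + (if \<theta> j = 1 then 1/2 else 1)) / 2 ^ n"
      using assms unfolding mem_box_cart by auto
    have l': "of_int (\<alpha> j) \<le> 2 ^ n * t $ j" using l P by (simp add: pos_divide_le_eq mult.commute)
    have u': "2 ^ n * t $ j \<le> of_int (\<alpha> j) + 1" using u P
      by (auto simp: pos_le_divide_eq mult.commute split: if_splits)
    have "\<bar>2 ^ n * t $ j\<bar> \<le> \<bar>of_int (\<alpha> j)\<bar> + 1" using l' u' by linarith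
    then have "\<bar>t $ j\<bar> * 2 ^ n \<le> \<bar>of_int (\<alpha> j)\<bar> + 1" by (simp add: abs_mult mult.commute)
    then show ?thesis using P by (simp add: pos_le_divide_eq)
  qed
  then have "(\<Sum>j\<in>UNIV. \<bar>t $ j\<bar>) \<le> (\<Sum>j\<in>UNIV. (\<bar>of_int (\<alpha> j)\<bar> + 1) / 2 ^ n)"
    by (intro sum_mono) auto
  also have "\<dots> = (\<Sum>j\<in>UNIV. \<bar>of_int (\<alpha> j)\<bar> + 1) / 2 ^ n"
    by (simp add: sum_divide_distrib)
  finally show ?thesis using norm_le_l1_cart[of t] by linarith
qed

lemma grid_norm:
  fixes \<alpha> :: "'n::finite \<Rightarrow> int"
  shows "norm (grid_pt n \<alpha>) \<le> (\<Sum>j\<in>UNIV. \<bar>of_int (\<alpha> j)\<bar> + 1) / 2 ^ n"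
proof -
  have "\<bar>grid_pt n \<alpha> $ j\<bar> \<le> (\<bar>of_int (\<alpha> j)\<bar> + 1) / 2 ^ n" for j
  proof -
    have "\<bar>of_int (\<alpha> j) + 1/2 :: real\<bar> \<le> \<bar>of_int (\<alpha> j)\<bar> + 1" by linarith
    then show ?thesis unfolding grid_pt_def by (simp add: divide_right_mono)
  qed
  then have "(\<Sum>j\<in>UNIV. \<bar>grid_pt n \<alpha> $ j\<bar>) \<le> (\<Sum>j\<in>UNIV. (\<bar>of_int (\<alpha> j)\<bar> + 1) / 2 ^ n)"
    by (intro sum_mono) auto
  also have "\<dots> = (\<Sum>j\<in>UNIV. \<bar>of_int (\<alpha> j)\<bar> + 1) / 2 ^ n"
    by (simp add: sum_divide_distrib)
  finally show ?thesis using norm_le_l1_cart[of "grid_pt n \<alpha>"] by linarith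
qed


theorem theorem3p2:
  fixes \<theta> :: "'n::finite \<Rightarrow> nat" and f :: "real^'n \<Rightarrow> real" and \<alpha> :: "'n \<Rightarrow> int"
  assumes "\<forall>j. \<theta> j \<in> {0, 1}"
    and "Ck (sum \<theta> UNIV + 1) f"
  shows "(\<lambda>n. \<bar>(-1) ^ sum \<theta> UNIV
              * 2 powr ((real n + 2) * real (sum \<theta> UNIV) + real n * real CARD('n) / 2)
              * haar_coeff n \<theta> \<alpha> f
            - D_theta \<theta> f (grid_pt n \<alpha>) / real (\<Prod>j\<in>UNIV. fact (\<theta> j))\<bar>)
         \<longlonglongrightarrow> 0"
proof -
  define T where "T = {j. \<theta> j = 1}"
  define k where "k = card T"
  define s where "s = CARD('n)"
  obtain ys where ys: "set ys = T \<and> distinct ys" using finite_distinct_list[of T] by auto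
  define xs where "xs = (SOME xs. distinct xs \<and> set xs = {j. \<theta> j = 1})"
  have "distinct xs \<and> set xs = {j. \<theta> j = 1}"
    unfolding xs_def by (rule someI_ex) (use ys T_def in auto)
  then have xs: "distinct xs" "set xs = T" unfolding T_def by auto
  define D where "D = foldr partial_deriv xs f"
  have Dth: "D_theta \<theta> f = D" unfolding D_theta_def D_def xs_def ..
  have lenxs: "length xs = k" using distinct_card[OF xs(1)] xs(2) k_def by simp
  have "sum \<theta> UNIV = (\<Sum>j\<in>UNIV. if \<theta> j = 1 then 1 else 0)"
    by (rule sum.cong) (use assms(1) in auto)
  also have "\<dots> = k" unfolding k_def T_def by (simp add: sum.If_cases)
  finally have sumth: "sum \<theta> UNIV = k" .
  have prodf: "(\<Prod>j\<in>UNIV. fact (\<theta> j)) = (1::nat)"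
  proof (rule prod.neutral, rule ballI)
    fix x :: 'n
    have "\<theta> x = 0 \<or> \<theta> x = 1" using assms(1) by auto
    then show "fact (\<theta> x) = (1::nat)" by (elim disjE) simp_all
  qed
  have Ckf: "Ck (k + 1) f" using assms(2) sumth by simp
  have "Ck (k + 1 - length xs) D" unfolding D_def using Ck_foldr[OF Ckf, of xs] lenxs by linarith
  then have "Ck 1 D" using lenxs by (metis add_diff_cancel_left' add.commute)
  then have contD: "continuous_on UNIV D" by (rule Ck_cont)
  then have isC: "isCont D 0" using continuous_on_eq_continuous_at[of UNIV D] by simp
  have cf: "continuous_on UNIV f" using Ckf by (rule Ck_cont)
  define C where "C = (\<Sum>j\<in>UNIV. \<bar>of_int (\<alpha> j)\<bar> + 1 :: real)"
  have C0: "C \<ge> 0" unfolding C_def by (intro sum_nonneg) auto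
  define a :: "nat \<Rightarrow> real^'n" where "a n = (\<chi> j. of_int (\<alpha> j) / 2 ^ n)" for n
  define b :: "nat \<Rightarrow> real^'n" where "b n = (\<chi> j. (of_int (\<alpha> j) + (if \<theta> j = 1 then 1/2 else 1)) / 2 ^ n)" for n
  define d :: "nat \<Rightarrow> real" where "d n = 1 / 2 ^ Suc n" for n
  define I where "I n = integral (cbox (a n) (b n)) (diffop (d n) xs f)" for n
  define Q :: "nat \<Rightarrow> real" where "Q n = 2 ^ ((n + 2) * k + n * s)" for n
  have key: "haar_coeff n \<theta> \<alpha> f = 2 powr (real n * real s / 2) * I n" for n
    unfolding haar_coeff_def I_def a_def b_def d_def s_def
    using haar_integral[OF assms(1) cf xs(1), of n \<alpha>] xs(2) T_def by simp
  have expr: "(-1) ^ sum \<theta> UNIV * 2 powr ((real n + 2) * real (sum \<theta> UNIV) + real n * real CARD('n) / 2)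
              * haar_coeff n \<theta> \<alpha> f - D_theta \<theta> f (grid_pt n \<alpha>) / real (\<Prod>j\<in>UNIV. fact (\<theta> j))
      = (-1) ^ k * Q n * I n - D (grid_pt n \<alpha>)" for n
  proof -
    have "(-1) ^ sum \<theta> UNIV * 2 powr ((real n + 2) * real (sum \<theta> UNIV) + real n * real CARD('n) / 2)
              * haar_coeff n \<theta> \<alpha> f = (-1) ^ k * (2 powr ((real n + 2) * real k + real n * real s / 2)
              * 2 powr (real n * real s / 2)) * I n"
      unfolding key sumth s_def by (simp add: mult.assoc)
    also have "\<dots> = (-1) ^ k * Q n * I n" unfolding Q_def powr_conv ..
    finally show ?thesis unfolding Dth prodf by simp
  qed
  have cont_meas: "measure lborel (cbox (a n) (b n)) = (1/2) ^ k * (1 / 2 ^ n) ^ s" for n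
    unfolding a_def b_def k_def T_def s_def by (rule content_box)
  have scale: "Q n * measure lborel (cbox (a n) (b n)) * d n ^ k = 1" for n
    unfolding cont_meas Q_def d_def by (rule scale_id)
  show ?thesis
  proof (rule LIMSEQ_I)
    fix \<epsilon> :: real assume ep: "\<epsilon> > 0"
    then have "\<epsilon> / 4 > 0" by simp
    then obtain r where r: "r > 0" "\<forall>y. dist y 0 < r \<longrightarrow> dist (D y) (D 0) < \<epsilon> / 4"
      using isC unfolding continuous_at_eps_delta by blast
    obtain N where N: "(C + real k) / r < 2 ^ N" using real_arch_pow[of 2] by auto
    have "\<forall>n\<ge>N. \<bar>(-1) ^ k * Q n * I n - D (grid_pt n \<alpha>)\<bar> \<le> \<epsilon> / 2"
    proof (intro allI impI)
      fix n assume nN: "N \<le> n"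
      define P :: real where "P = 2 ^ n"
      have P0: "P > 0" unfolding P_def by simp
      have "(2::real) ^ N \<le> 2 ^ n" using nN by (rule power_increasing) simp
      then have "(C + real k) / r < P" using N unfolding P_def by linarith
      then have small: "(C + real k) / P < r" using r(1) P0 by (simp add: field_simps)
      define Z where "Z = D (grid_pt n \<alpha>)"
      have "norm (grid_pt n \<alpha>) \<le> C / P" unfolding C_def P_def by (rule grid_norm)
      also have "\<dots> \<le> (C + real k) / P" using P0 by (simp add: divide_right_mono)
      finally have "dist (grid_pt n \<alpha>) 0 < r" using small by simp
      then have Zc: "dist Z (D 0) < \<epsilon> / 4" using r(2) Z_def by blast
      have dpos: "d n > 0" unfolding d_def by simp
      have dle: "d n \<le> 1 / P" unfolding d_def P_def by (simp add: field_simps)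
      have pt: "norm (diffop (d n) xs f t - (-d n) ^ k * Z) \<le> d n ^ k * (\<epsilon> / 2)"
        if t: "t \<in> cbox (a n) (b n)" for t
      proof -
        obtain \<xi> where \<xi>: "norm (\<xi> - t) \<le> real (length xs) * d n"
          and eq: "diffop (d n) xs f t = (-d n) ^ length xs * foldr partial_deriv xs f \<xi>"
          using diffop_mvt[OF dpos Ckf, of xs t] lenxs by auto
        have "norm t \<le> C / P" unfolding C_def P_def
          by (rule box_norm[of t \<alpha> n \<theta>]) (use t in \<open>simp add: a_def b_def\<close>)
        moreover have "real k * d n \<le> real k / P"
        proof -
          have "real k * d n \<le> real k * (1 / P)" by (rule mult_left_mono[OF dle]) simp
          then show ?thesis by simp
        qed
        moreover have "norm \<xi> \<le> norm t + norm (\<xi> - t)" by (rule norm_triangle_sub)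
        moreover have "norm (\<xi> - t) \<le> real k * d n" using \<xi> lenxs by simp
        ultimately have "norm \<xi> \<le> C / P + real k / P" by linarith
        also have "\<dots> = (C + real k) / P" by (simp add: add_divide_distrib)
        finally have "dist \<xi> 0 < r" using small by simp
        then have "dist (D \<xi>) (D 0) < \<epsilon> / 4" using r(2) by blast
        then have dd: "\<bar>D \<xi> - Z\<bar> \<le> \<epsilon> / 2" using Zc unfolding dist_real_def by linarith
        have "diffop (d n) xs f t - (-d n) ^ k * Z = (-d n) ^ k * (D \<xi> - Z)"
          using eq lenxs unfolding D_def by (simp add: algebra_simps)
        then have "norm (diffop (d n) xs f t - (-d n) ^ k * Z) = d n ^ k * \<bar>D \<xi> - Z\<bar>"
          using dpos by (simp add: abs_mult power_abs)
        also have "\<dots> \<le> d n ^ k * (\<epsilon> / 2)" using dd dpos by (simp add: mult_left_mono)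
        finally show ?thesis .
      qed
      have "Ck (k + 1) (diffop (d n) xs f)" using Ck_diffop[OF Ckf] .
      then have cdf: "continuous_on UNIV (diffop (d n) xs f)" by (rule Ck_cont)
      have "diffop (d n) xs f integrable_on cbox (a n) (b n)"
        by (rule integrable_continuous[OF continuous_on_subset[OF cdf subset_UNIV]])
      then have hI: "(diffop (d n) xs f has_integral I n) (cbox (a n) (b n))"
        unfolding I_def by (rule integrable_integral)
      have hi: "((\<lambda>t. diffop (d n) xs f t - (-d n) ^ k * Z) has_integral
          (I n - measure lborel (cbox (a n) (b n)) *\<^sub>R ((-d n) ^ k * Z))) (cbox (a n) (b n))"
        by (rule has_integral_diff[OF hI has_integral_const])
      have bnd: "norm (I n - measure lborel (cbox (a n) (b n)) * ((-d n) ^ k * Z))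
          \<le> d n ^ k * (\<epsilon> / 2) * measure lborel (cbox (a n) (b n))"
        using has_integral_bound[OF _ hi pt] dpos ep by simp
      define M where "M = measure lborel (cbox (a n) (b n))"
      have Qp: "Q n > 0" unfolding Q_def by simp
      have sc: "Q n * M * d n ^ k = 1" unfolding M_def by (rule scale)
      have m1: "(-1::real) ^ k * (-d n) ^ k = d n ^ k"
      proof -
        have "(-1::real) ^ k * (-d n) ^ k = ((-1) * (-d n)) ^ k" by (simp only: power_mult_distrib)
        then show ?thesis by simp
      qed
      have "(-1) ^ k * Q n * I n - Z = (-1) ^ k * Q n * (I n - M * ((-d n) ^ k * Z))"
      proof -
        have "(-1) ^ k * Q n * (M * ((-d n) ^ k * Z)) = (Q n * M * ((-1) ^ k * (-d n) ^ k)) * Z"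
          by (simp add: algebra_simps)
        also have "\<dots> = Z" using sc m1 by simp
        finally show ?thesis by (simp add: right_diff_distrib)
      qed
      then have "\<bar>(-1) ^ k * Q n * I n - Z\<bar> = Q n * \<bar>I n - M * ((-d n) ^ k * Z)\<bar>"
        using Qp by (simp add: abs_mult power_abs)
      also have "\<dots> \<le> Q n * (d n ^ k * (\<epsilon> / 2) * M)"
        using bnd Qp unfolding M_def by (intro mult_left_mono) auto
      also have "\<dots> = (Q n * M * d n ^ k) * (\<epsilon> / 2)" by (simp add: algebra_simps)
      also have "\<dots> = \<epsilon> / 2" using sc by simp
      finally show "\<bar>(-1) ^ k * Q n * I n - D (grid_pt n \<alpha>)\<bar> \<le> \<epsilon> / 2" unfolding Z_def .
    qed
    then show "\<exists>no. \<forall>n\<ge>no. norm (\<bar>(-1) ^ sum \<theta> UNIV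
              * 2 powr ((real n + 2) * real (sum \<theta> UNIV) + real n * real CARD('n) / 2)
              * haar_coeff n \<theta> \<alpha> f
            - D_theta \<theta> f (grid_pt n \<alpha>) / real (\<Prod>j\<in>UNIV. fact (\<theta> j))\<bar> - 0) < \<epsilon>"
    proof (intro exI[of _ N] allI impI)
      fix n assume "N \<le> n"
      then have "\<bar>(-1) ^ k * Q n * I n - D (grid_pt n \<alpha>)\<bar> \<le> \<epsilon> / 2" using \<open>\<forall>n\<ge>N. _\<close> by blast
      then show "norm (\<bar>(-1) ^ sum \<theta> UNIV
              * 2 powr ((real n + 2) * real (sum \<theta> UNIV) + real n * real CARD('n) / 2)
              * haar_coeff n \<theta> \<alpha> f
            - D_theta \<theta> f (grid_pt n \<alpha>) / real (\<Prod>j\<in>UNIV. fact (\<theta> j))\<bar> - 0) < \<epsilon>"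
        using ep unfolding expr by simp
    qed
  qed
qed

end
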